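(* Let $P\in\mathbb{C}^{m\times m}$ be positive definite. Then for every Hermitian $H\in\mathbb{C}^{m\times m}$ with $\mathrm{tr}(H)=0$, $$\frac{\mathrm{tr}(H^2P)}{\mathrm{tr}(P)}-\frac{\mathrm{tr}(HP)^2}{\mathrm{tr}(P)^2}\ \ge\ \frac{\|H\|_F^2}{\mathrm{tr}(P)\,\mathrm{tr}(P^{-1})}.$$ *)

theory Defs
  imports "HOL-Analysis.Analysis"
begin

text \<open>Complex m x m matrices are rendered as complex^'m^'m (m = CARD('m)).\<close>

definition conj_transpose :: "complex^'n^'m \<Rightarrow> complex^'m^'n" where
  "conj_transpose A = transpose (map_matrix cnj A)"

definition hermitian :: "complex^'n^'n \<Rightarrow> bool" where
  "hermitian A \<longleftrightarrow> conj_transpose A = A"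

definition quad_form :: "complex^'n^'n \<Rightarrow> complex^'n \<Rightarrow> complex" where
  "quad_form A x = (\<Sum>i\<in>UNIV. cnj (x $ i) * ((A *v x) $ i))"

definition positive_definite :: "complex^'n^'n \<Rightarrow> bool" where
  "positive_definite A \<longleftrightarrow> hermitian A \<and>
     (\<forall>x. x \<noteq> 0 \<longrightarrow> Im (quad_form A x) = 0 \<and> 0 < Re (quad_form A x))"

definition frob_norm_sq :: "complex^'n^'m \<Rightarrow> real" where
  "frob_norm_sq A = (\<Sum>i\<in>UNIV. \<Sum>j\<in>UNIV. (cmod (A $ i $ j))\<^sup>2)"

end

theory Submission
  imports Defs
begin

definition sf :: "complex^'n^'n \<Rightarrow> ('n \<Rightarrow> complex) \<Rightarrow> ('n \<Rightarrow> complex) \<Rightarrow> complex" where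
  "sf P g h = (\<Sum>i\<in>UNIV. \<Sum>l\<in>UNIV. cnj (g i) * P$i$l * h l)"

lemma herm_entry: assumes "hermitian P" shows "cnj (P$l$i) = P$i$l"
proof -
  have "conj_transpose P $ i $ l = P $ i $ l" using assms unfolding hermitian_def by simp
  then show ?thesis by (simp add: conj_transpose_def transpose_def)
qed

lemma sf_swap: assumes "hermitian P" shows "sf P h g = cnj (sf P g h)"
proof -
  have "cnj (sf P g h) = (\<Sum>i\<in>UNIV. \<Sum>l\<in>UNIV. g i * P$l$i * cnj (h l))"
    unfolding sf_def by (simp add: herm_entry[OF assms])
  also have "\<dots> = sf P h g" unfolding sf_def
    by (subst sum.swap) (simp add: mult.commute mult.left_commute)
  finally show ?thesis by simp
qed

lemma sf_psd: assumes "positive_definite P" shows "0 \<le> Re (sf P g g)" "Im (sf P g g) = 0"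
proof -
  define x where "x = (\<chi> i. g i)"
  have q: "quad_form P x = sf P g g"
    unfolding quad_form_def sf_def x_def matrix_vector_mult_def
    by (simp add: sum_distrib_left mult.assoc)
  show "0 \<le> Re (sf P g g)" "Im (sf P g g) = 0"
  proof (atomize (full), cases "x = 0")
    case True
    then have "\<And>i. g i = 0" unfolding x_def by (metis vec_lambda_beta zero_index)
    then show "0 \<le> Re (sf P g g) \<and> Im (sf P g g) = 0" by (simp add: sf_def)
  next
    case False
    then show "0 \<le> Re (sf P g g) \<and> Im (sf P g g) = 0" using assms q unfolding positive_definite_def
      by (metis less_le)
  qed
qed

lemma sf_expand: "sf P (\<lambda>i. g i + c * h i) (\<lambda>i. g i + c * h i) =
   sf P g g + c * sf P g h + cnj c * sf P h g + cnj c * c * sf P h h"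
  unfolding sf_def
  by (simp add: algebra_simps sum.distrib sum_distrib_left)


lemma sf_cs: assumes "positive_definite P" shows "(cmod (sf P g h))^2 \<le> Re (sf P g g) * Re (sf P h h)"
proof -
  have herm: "hermitian P" using assms unfolding positive_definite_def by simp
  define b where "b = sf P g h"
  define a where "a = Re (sf P g g)"
  define c where "c = Re (sf P h h)"
  have ga: "sf P g g = of_real a" using sf_psd[OF assms, of g] a_def by (intro complex_eqI) simp_all
  have hc: "sf P h h = of_real c" using sf_psd[OF assms, of h] c_def by (intro complex_eqI) simp_all
  have hg: "sf P h g = cnj b" unfolding b_def by (rule sf_swap[OF herm])
  have c0: "0 \<le> c" using sf_psd(1)[OF assms, of h] c_def by simp
  have key: "0 \<le> a - 2*t*(cmod b)^2 + t^2*(cmod b)^2*c" for t :: real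
  proof -
    have "0 \<le> Re (sf P (\<lambda>i. g i + (-(of_real t * cnj b)) * h i) (\<lambda>i. g i + (-(of_real t * cnj b)) * h i))"
      using sf_psd[OF assms] by blast
    also have "\<dots> = a - 2*t*(cmod b)^2 + t^2*(cmod b)^2*c"
      unfolding sf_expand ga hc hg b_def[symmetric]
      using cmod_power2[of b] by (simp add: power2_eq_square algebra_simps)
    finally show ?thesis .
  qed
  show ?thesis
  proof (cases "cmod b = 0")
    case True then show ?thesis using b_def a_def c_def c0 sf_psd[OF assms, of g] by simp
  next
    case False
    then have bp: "0 < (cmod b)^2" by simp
    show ?thesis
    proof (cases "c = 0")
      case True
      have "0 \<le> a - 2*((a+1)/(2*(cmod b)^2))*(cmod b)^2" using key[of "(a+1)/(2*(cmod b)^2)"] True by simp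
      also have "\<dots> = -1" using bp by (simp add: field_simps)
      finally show ?thesis by simp
    next
      case False
      then have cp: "0 < c" using c0 by simp
      have "0 \<le> a - 2*(1/c)*(cmod b)^2 + (1/c)^2*(cmod b)^2*c" using key[of "1/c"] .
      also have "\<dots> = (a*c - (cmod b)^2)/c" using cp by (simp add: field_simps power2_eq_square)
      finally have "0 \<le> a*c - (cmod b)^2" using cp by (simp add: divide_nonneg_pos zero_le_divide_iff)
      then show ?thesis unfolding b_def a_def c_def by (simp add: mult.commute)
    qed
  qed
qed


lemma pd_inv: assumes "positive_definite P" shows "P ** matrix_inv P = mat 1"
proof -
  have "\<forall>x. P *v x = 0 \<longrightarrow> x = 0"
  proof (intro allI impI)
    fix x assume px: "P *v x = 0"
    have "quad_form P x = 0" unfolding quad_form_def px by simp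
    then show "x = 0" using assms unfolding positive_definite_def by force
  qed
  then have "invertible P" unfolding invertible_left_inverse matrix_left_invertible_ker[symmetric] .
  then have "\<exists>A'. P ** A' = mat 1 \<and> A' ** P = mat 1" unfolding invertible_def .
  then have "P ** matrix_inv P = mat 1 \<and> matrix_inv P ** P = mat 1"
    unfolding matrix_inv_def by (rule someI_ex)
  then show ?thesis by simp
qed

lemma pd_inv_entry: assumes "positive_definite P"
  shows "(\<Sum>l\<in>UNIV. P$k$l * matrix_inv P $ l $ i) = (if k = i then 1 else 0)"
proof -
  have "(P ** matrix_inv P) $ k $ i = mat 1 $ k $ i" using pd_inv[OF assms] by simp
  then show ?thesis by (simp add: matrix_matrix_mult_def mat_def)
qed

lemma sf_col: assumes "positive_definite P"
  shows "sf P x (\<lambda>l. matrix_inv P $ l $ i) = cnj (x i)"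
proof -
  have "sf P x (\<lambda>l. matrix_inv P $ l $ i) = (\<Sum>k\<in>UNIV. cnj (x k) * (\<Sum>l\<in>UNIV. P$k$l * matrix_inv P $ l $ i))"
    unfolding sf_def by (simp add: sum_distrib_left mult.assoc)
  also have "\<dots> = cnj (x i)" unfolding pd_inv_entry[OF assms] by (simp add: if_distrib cong: if_cong)
  finally show ?thesis .
qed

lemma pd_bound: assumes "positive_definite P"
  shows "(\<Sum>i\<in>UNIV. (cmod (x i))^2) \<le> Re (trace (matrix_inv P)) * Re (sf P x x)"
proof -
  have "(cmod (x i))^2 \<le> Re (sf P x x) * Re (matrix_inv P $ i $ i)" for i
  proof -
    have "(cmod (x i))^2 = (cmod (sf P x (\<lambda>l. matrix_inv P $ l $ i)))^2" unfolding sf_col[OF assms] by simp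
    also have "\<dots> \<le> Re (sf P x x) * Re (sf P (\<lambda>l. matrix_inv P $ l $ i) (\<lambda>l. matrix_inv P $ l $ i))"
      by (rule sf_cs[OF assms])
    also have "\<dots> = Re (sf P x x) * Re (matrix_inv P $ i $ i)" unfolding sf_col[OF assms] by simp
    finally show ?thesis .
  qed
  then have "(\<Sum>i\<in>UNIV. (cmod (x i))^2) \<le> (\<Sum>i\<in>UNIV. Re (sf P x x) * Re (matrix_inv P $ i $ i))"
    by (rule sum_mono)
  also have "\<dots> = Re (trace (matrix_inv P)) * Re (sf P x x)"
    by (simp add: trace_def sum_distrib_left mult.commute)
  finally show ?thesis .
qed


lemma ifz1: "(if c then (1::complex) else 0) * x = (if c then x else 0)" by simp
lemma ifz2: "x * (if c then (1::complex) else 0) = (if c then x else 0)" by simp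
lemma ifz3: "cnj (if c then (1::complex) else 0) = (if c then 1 else 0)" by simp

lemma ifz4: "(cmod (if c then (1::complex) else 0))^2 = (if c then 1 else 0)" by simp

lemma ifz5: "(if c then x else (0::complex)) * y = (if c then x*y else 0)" by simp

lemma ifz6: "(\<Sum>l\<in>A. if c then f l else (0::complex)) = (if c then \<Sum>l\<in>A. f l else 0)" by simp

lemma trace_HHP: fixes H P :: "complex^'n^'n" shows "trace (H ** H ** P) = (\<Sum>j\<in>UNIV. \<Sum>i\<in>UNIV. \<Sum>l\<in>UNIV. H$j$i * P$i$l * H$l$j)"
proof -
  have "trace (H ** H ** P) = trace (P ** (H ** H))" by (rule trace_mul_sym[of "H ** H" P])
  also have "\<dots> = trace ((P ** H) ** H)" by (simp add: matrix_mul_assoc)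
  also have "\<dots> = trace (H ** (P ** H))" by (rule trace_mul_sym[of "P ** H" H])
  also have "\<dots> = (\<Sum>j\<in>UNIV. \<Sum>i\<in>UNIV. \<Sum>l\<in>UNIV. H$j$i * P$i$l * H$l$j)"
    by (simp add: trace_def matrix_matrix_mult_def sum_distrib_left mult.assoc)
  finally show ?thesis .
qed

theorem mainTheorem11:
  fixes P H :: "complex^'m^'m"
  assumes "positive_definite P"
    and "hermitian H"
    and "trace H = 0"
  shows "Re (trace (H ** H ** P)) / Re (trace P) - (Re (trace (H ** P)))\<^sup>2 / (Re (trace P))\<^sup>2
           \<ge> frob_norm_sq H / (Re (trace P) * Re (trace (matrix_inv P)))"
proof -
  note pd = assms(1)
  have hermP: "hermitian P" using pd unfolding positive_definite_def by simp
  define A where "A = Re (trace (H ** H ** P))"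
  define B where "B = Re (trace (H ** P))"
  define t where "t = Re (trace P)"
  define s where "s = Re (trace (matrix_inv P))"
  define e where "e = (\<lambda>j::'m. \<lambda>i::'m. if i = j then (1::complex) else 0)"
  have sfe: "sf P (e j) (e j) = P$j$j" for j unfolding sf_def e_def
    by (simp add: ifz1 ifz2 ifz3 ifz5 ifz6)
  have diag: "0 < s \<and> 0 < Re (P$j$j)" for j
  proof -
    have "(\<Sum>i\<in>UNIV. (cmod (e j i))^2) = 1" unfolding e_def by (simp add: ifz4)
    then have "1 \<le> s * Re (P$j$j)" using pd_bound[OF pd, of "e j"] unfolding sfe s_def by simp
    moreover have "0 \<le> Re (P$j$j)" using sf_psd(1)[OF pd, of "e j"] unfolding sfe .
    ultimately have "0 < s * Re (P$j$j)" "0 \<le> Re (P$j$j)" by linarith+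
    then show ?thesis by (auto simp: zero_less_mult_iff)
  qed
  have sp: "0 < s" using diag by blast
  have tp: "0 < t" unfolding t_def trace_def using diag by (simp add: Re_sum sum_pos)
  define \<mu> where "\<mu> = B / t"
  define c where "c = (\<lambda>j i. H$i$j + (- complex_of_real \<mu>) * e j i)"
  have elem: "(cmod (c j i))^2 = (cmod (H$i$j))^2 + (if i = j then \<mu>^2 - 2*\<mu>*Re (H$j$j) else 0)" for i j
    unfolding c_def e_def using cmod_power2 by (simp add: power2_eq_square algebra_simps cmod_power2)
  have "(\<Sum>j\<in>UNIV. \<Sum>i\<in>UNIV. (cmod (c j i))^2)
      = (\<Sum>j\<in>UNIV. \<Sum>i\<in>UNIV. (cmod (H$i$j))^2) + (\<Sum>j\<in>UNIV. \<mu>^2 - 2*\<mu>*Re (H$j$j))"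
    unfolding elem by (simp add: sum.distrib ifz1 ifz2 ifz3 ifz5 ifz6)
  also have "(\<Sum>j\<in>UNIV. \<mu>^2 - 2*\<mu>*Re (H$j$j)) = of_nat CARD('m) * \<mu>^2 - 2*\<mu>*Re (trace H)"
    by (simp add: trace_def sum_subtractf sum_distrib_left Re_sum)
  also have "(\<Sum>j\<in>UNIV. \<Sum>i\<in>UNIV. (cmod (H$i$j))^2) = frob_norm_sq H"
    unfolding frob_norm_sq_def by (rule sum.swap)
  finally have frob: "frob_norm_sq H \<le> (\<Sum>j\<in>UNIV. \<Sum>i\<in>UNIV. (cmod (c j i))^2)"
    using assms(3) by simp
  have sfc: "sf P (c j) (c j) = sf P (\<lambda>i. H$i$j) (\<lambda>i. H$i$j)
     + (- complex_of_real \<mu>) * (\<Sum>i\<in>UNIV. H$j$i * P$i$j)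
     + (- complex_of_real \<mu>) * (\<Sum>l\<in>UNIV. P$j$l * H$l$j)
     + complex_of_real (\<mu>^2) * P$j$j" for j
  proof -
    have "sf P (c j) (c j) = sf P (\<lambda>i. H$i$j) (\<lambda>i. H$i$j)
     + (- complex_of_real \<mu>) * sf P (\<lambda>i. H$i$j) (e j) + cnj (- complex_of_real \<mu>) * sf P (e j) (\<lambda>i. H$i$j)
     + cnj (- complex_of_real \<mu>) * (- complex_of_real \<mu>) * sf P (e j) (e j)"
      unfolding c_def by (rule sf_expand)
    moreover have "sf P (\<lambda>i. H$i$j) (e j) = (\<Sum>i\<in>UNIV. H$j$i * P$i$j)"
      unfolding sf_def e_def by (simp add: herm_entry[OF assms(2)] ifz1 ifz2 ifz3 ifz5 ifz6)
    moreover have "sf P (e j) (\<lambda>i. H$i$j) = (\<Sum>l\<in>UNIV. P$j$l * H$l$j)"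
      unfolding sf_def e_def by (simp add: ifz1 ifz2 ifz3 ifz5 ifz6)
    ultimately show ?thesis unfolding sfe by (simp add: power2_eq_square)
  qed
  have sum1: "(\<Sum>j\<in>UNIV. sf P (\<lambda>i. H$i$j) (\<lambda>i. H$i$j)) = trace (H ** H ** P)"
    unfolding trace_HHP sf_def by (simp add: herm_entry[OF assms(2)])
  have sum2: "(\<Sum>j\<in>UNIV. \<Sum>i\<in>UNIV. H$j$i * P$i$j) = trace (H ** P)"
    by (simp add: trace_def matrix_matrix_mult_def)
  have sum3: "(\<Sum>j\<in>UNIV. \<Sum>l\<in>UNIV. P$j$l * H$l$j) = trace (H ** P)"
    by (subst trace_mul_sym) (simp add: trace_def matrix_matrix_mult_def)
  have "(\<Sum>j\<in>UNIV. sf P (c j) (c j)) = trace (H ** H ** P) - 2 * complex_of_real \<mu> * trace (H ** P)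
      + complex_of_real (\<mu>^2) * trace P"
    unfolding sfc sum.distrib sum1 sum_distrib_left[symmetric] sum2 sum3
    by (simp add: trace_def algebra_simps)
  then have "(\<Sum>j\<in>UNIV. Re (sf P (c j) (c j))) = A - 2 * \<mu> * B + \<mu>^2 * t"
    unfolding A_def B_def t_def by (simp flip: Re_sum)
  also have "\<dots> = A - B^2 / t" unfolding \<mu>_def using tp by (simp add: field_simps power2_eq_square)
  finally have qsum: "(\<Sum>j\<in>UNIV. Re (sf P (c j) (c j))) = A - B^2 / t" .
  have "(\<Sum>j\<in>UNIV. \<Sum>i\<in>UNIV. (cmod (c j i))^2) \<le> (\<Sum>j\<in>UNIV. s * Re (sf P (c j) (c j)))"
    by (rule sum_mono) (use pd_bound[OF pd] s_def in simp)
  also have "\<dots> = s * (A - B^2 / t)" by (simp add: sum_distrib_left[symmetric] qsum)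
  finally have main: "frob_norm_sq H \<le> s * (A - B^2 / t)" using frob by linarith
  have "frob_norm_sq H / (t * s) \<le> (s * (A - B^2 / t)) / (t * s)"
    by (rule divide_right_mono[OF main]) (use sp tp in simp)
  also have "\<dots> = A / t - B^2 / t^2" using sp tp by (simp add: field_simps power2_eq_square)
  finally show ?thesis unfolding A_def B_def t_def s_def by simp
qed

end
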